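(* Let $\mathrm{Sch}$ be a schema with access methods (possibly result-bounded) and constraints $\Sigma$ consisting of inclusion dependencies, and let $Q$ be a Boolean conjunctive query that is access-determined over $\mathrm{Sch}$. Then $Q$ is access monotonically-determined over $\mathrm{Sch}$.
   Context: An inclusion dependency is a TGD $R(\vec x)\rightarrow\exists\vec y\,S(\vec z)$ with single body and head atoms and no repeated variables. A schema consists of a signature, constraints $\Sigma$, and access methods, each on a relation $R$ with input positions and possibly a result bound $k$. An access $(\mathrm{mt},\mathrm{AccBind})$ on instance $I$ binds the input positions to values of $I$; its matching tuples $M$ are the $R$-tuples agreeing with the binding; a valid output is $J\subseteq M$ with $J=M$ if no bound, and for result bound $k$, $|J|\le k$ and $\forall j\le k$: $|M|\ge j\Rightarrow|J|\ge j$. A valid access selection $\sigma$ maps each access to a valid output. The accessible part $\mathrm{AccPart}(\sigma,I)=\bigcup_i\mathrm{AccPart}_i$, where $\mathrm{AccPart}_0=\mathrm{accessible}_0=\emptyset$, $\mathrm{AccPart}_{i+1}$ is the union of the facts $\sigma(\mathrm{mt},\mathrm{AccBind})$ over all methods and bindings with values in $\mathrm{accessible}_i$, and $\mathrm{accessible}_{i+1}$ is the set of values of $\mathrm{AccPart}_{i+1}$. $Q$ is access monotonically-determined if for all instances $I_1,I_2$ satisfying $\Sigma$ with valid access selections $\sigma_1,\sigma_2$ such that $\mathrm{AccPart}(\sigma_1,I_1)\subseteq\mathrm{AccPart}(\sigma_2,I_2)$, we have $Q(I_1)\subseteq Q(I_2)$. $Q$ is access-determined if for all instances $I_1,I_2$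 satisfying $\Sigma$ with valid access selections $\sigma_1,\sigma_2$ such that $\mathrm{AccPart}(\sigma_1,I_1)=\mathrm{AccPart}(\sigma_2,I_2)$, we have $Q(I_1)=Q(I_2)$. Instances may be finite or infinite. *)

theory Defs
  imports Main
begin

type_synonym ('r,'v) fact = "'r \<times> 'v list"
type_synonym ('r,'v) inst = "('r,'v) fact set"

definition well_formed_inst :: "('r \<Rightarrow> nat) \<Rightarrow> ('r,'v) inst \<Rightarrow> bool" where
  "well_formed_inst ar I \<longleftrightarrow> (\<forall>f \<in> I. length (snd f) = ar (fst f))"

definition values_of :: "('r,'v) inst \<Rightarrow> 'v set" where
  "values_of I = (\<Union>f \<in> I. set (snd f))"

text \<open>An ID  R(xs) --> exists ys. S(zs): body relation, body variables, head relation,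
  head variables; the existential variables ys are the head variables not occurring in xs.\<close>
record ('r,'x) incl_dep =
  id_body_rel :: 'r
  id_body_vars :: "'x list"
  id_head_rel :: 'r
  id_head_vars :: "'x list"

definition well_formed_id :: "('r \<Rightarrow> nat) \<Rightarrow> ('r,'x) incl_dep \<Rightarrow> bool" where
  "well_formed_id ar \<tau> \<longleftrightarrow>
     length (id_body_vars \<tau>) = ar (id_body_rel \<tau>) \<and>
     length (id_head_vars \<tau>) = ar (id_head_rel \<tau>) \<and>
     distinct (id_body_vars \<tau>) \<and> distinct (id_head_vars \<tau>)"

definition satisfies_id :: "('r,'v) inst \<Rightarrow> ('r,'x) incl_dep \<Rightarrow> bool" where
  "satisfies_id I \<tau> \<longleftrightarrow>
     (\<forall>h :: 'x \<Rightarrow> 'v. (id_body_rel \<tau>, map h (id_body_vars \<tau>)) \<in> I \<longrightarrow>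
        (\<exists>h' :: 'x \<Rightarrow> 'v. (\<forall>x \<in> set (id_body_vars \<tau>). h' x = h x) \<and>
                         (id_head_rel \<tau>, map h' (id_head_vars \<tau>)) \<in> I))"

definition satisfies :: "('r,'v) inst \<Rightarrow> ('r,'x) incl_dep set \<Rightarrow> bool" where
  "satisfies I \<Sigma> \<longleftrightarrow> (\<forall>\<tau> \<in> \<Sigma>. satisfies_id I \<tau>)"

text \<open>Access methods are named by elements of type 'm; each has a relation, a set of
  input positions (0-based) and an optional result bound.\<close>
record ('r,'x,'m) schema =
  arity :: "'r \<Rightarrow> nat"
  constraints :: "('r,'x) incl_dep set"
  methods :: "'m set"
  meth_rel :: "'m \<Rightarrow> 'r"
  meth_inputs :: "'m \<Rightarrow> nat set"
  meth_bound :: "'m \<Rightarrow> nat option"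

definition well_formed_schema :: "('r,'x,'m) schema \<Rightarrow> bool" where
  "well_formed_schema Sch \<longleftrightarrow>
     (\<forall>\<tau> \<in> constraints Sch. well_formed_id (arity Sch) \<tau>) \<and>
     (\<forall>mt \<in> methods Sch. meth_inputs Sch mt \<subseteq> {..< arity Sch (meth_rel Sch mt)})"

text \<open>A binding assigns values exactly to the input positions of the method.\<close>
type_synonym 'v binding = "nat \<Rightarrow> 'v option"

definition matching :: "('r,'x,'m) schema \<Rightarrow> ('r,'v) inst \<Rightarrow> 'm \<Rightarrow> 'v binding \<Rightarrow> ('r,'v) inst" where
  "matching Sch I mt b =
     {f \<in> I. fst f = meth_rel Sch mt \<and>
             (\<forall>i \<in> meth_inputs Sch mt. b i = Some (snd f ! i))}"

definition valid_output :: "('r,'x,'m) schema \<Rightarrow> ('r,'v) inst \<Rightarrow> 'm \<Rightarrow> 'v binding \<Rightarrow> ('r,'v) inst \<Rightarrow> bool" where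
  "valid_output Sch I mt b J \<longleftrightarrow>
     (let M = matching Sch I mt b in
       J \<subseteq> M \<and>
       (case meth_bound Sch mt of
          None \<Rightarrow> J = M
        | Some k \<Rightarrow> finite J \<and> card J \<le> k \<and>
                    (\<forall>j \<le> k. (infinite M \<or> j \<le> card M) \<longrightarrow> j \<le> card J)))"

type_synonym ('m,'r,'v) selection = "'m \<Rightarrow> 'v binding \<Rightarrow> ('r,'v) inst"

definition valid_selection :: "('r,'x,'m) schema \<Rightarrow> ('r,'v) inst \<Rightarrow> ('m,'r,'v) selection \<Rightarrow> bool" where
  "valid_selection Sch I \<sigma> \<longleftrightarrow>
     (\<forall>mt \<in> methods Sch. \<forall>b. dom b = meth_inputs Sch mt \<and> ran b \<subseteq> values_of I \<longrightarrow>
        valid_output Sch I mt b (\<sigma> mt b))"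

fun acc_part_step :: "('r,'x,'m) schema \<Rightarrow> ('m,'r,'v) selection \<Rightarrow> nat \<Rightarrow> ('r,'v) inst" where
  "acc_part_step Sch \<sigma> 0 = {}"
| "acc_part_step Sch \<sigma> (Suc i) =
     (\<Union>{\<sigma> mt b | mt b. mt \<in> methods Sch \<and> dom b = meth_inputs Sch mt \<and>
                         ran b \<subseteq> values_of (acc_part_step Sch \<sigma> i)})"

definition acc_part :: "('r,'x,'m) schema \<Rightarrow> ('m,'r,'v) selection \<Rightarrow> ('r,'v) inst" where
  "acc_part Sch \<sigma> = (\<Union>i. acc_part_step Sch \<sigma> i)"

type_synonym ('r,'x) bcq = "('r \<times> 'x list) list"

definition well_formed_bcq :: "('r \<Rightarrow> nat) \<Rightarrow> ('r,'x) bcq \<Rightarrow> bool" where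
  "well_formed_bcq ar Q \<longleftrightarrow> (\<forall>a \<in> set Q. length (snd a) = ar (fst a))"

definition holds_bcq :: "('r,'x) bcq \<Rightarrow> ('r,'v) inst \<Rightarrow> bool" where
  "holds_bcq Q I \<longleftrightarrow> (\<exists>h :: 'x \<Rightarrow> 'v. \<forall>a \<in> set Q. (fst a, map h (snd a)) \<in> I)"

text \<open>For a Boolean query, Q(I1) \<subseteq> Q(I2) means Q(I1) implies Q(I2).\<close>
definition access_mono_determined :: "('r,'x,'m) schema \<Rightarrow> ('r,'x) bcq \<Rightarrow> 'v itself \<Rightarrow> bool" where
  "access_mono_determined Sch Q _ \<longleftrightarrow>
     (\<forall>(I1 :: ('r,'v) inst) I2 \<sigma>1 \<sigma>2.
        well_formed_inst (arity Sch) I1 \<and> well_formed_inst (arity Sch) I2 \<and>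
        satisfies I1 (constraints Sch) \<and> satisfies I2 (constraints Sch) \<and>
        valid_selection Sch I1 \<sigma>1 \<and> valid_selection Sch I2 \<sigma>2 \<and>
        acc_part Sch \<sigma>1 \<subseteq> acc_part Sch \<sigma>2 \<longrightarrow>
        (holds_bcq Q I1 \<longrightarrow> holds_bcq Q I2))"

definition access_determined :: "('r,'x,'m) schema \<Rightarrow> ('r,'x) bcq \<Rightarrow> 'v itself \<Rightarrow> bool" where
  "access_determined Sch Q _ \<longleftrightarrow>
     (\<forall>(I1 :: ('r,'v) inst) I2 \<sigma>1 \<sigma>2.
        well_formed_inst (arity Sch) I1 \<and> well_formed_inst (arity Sch) I2 \<and>
        satisfies I1 (constraints Sch) \<and> satisfies I2 (constraints Sch) \<and>
        valid_selection Sch I1 \<sigma>1 \<and> valid_selection Sch I2 \<sigma>2 \<and>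
        acc_part Sch \<sigma>1 = acc_part Sch \<sigma>2 \<longrightarrow>
        (holds_bcq Q I1 \<longleftrightarrow> holds_bcq Q I2))"

end

theory Submission
  imports Defs
begin

unbundle cardinal_syntax

lemma ex_inj: assumes "infinite (UNIV::'v set)" shows "\<exists>p::'v+'v \<Rightarrow> 'v. inj p"
proof -
  have le: "|(UNIV::'v set)| \<le>o |(UNIV::'v set)|" by (rule ordIso_imp_ordLeq[OF card_of_refl])
  have "|(UNIV::'v set) <+> (UNIV::'v set)| =o |(UNIV::'v set)|"
    using card_of_Plus_infinite1[OF _ le] assms by simp
  then obtain f where "bij_betw f ((UNIV::'v set) <+> (UNIV::'v set)) (UNIV::'v set)"
    using card_of_ordIso by blast
  then show ?thesis by (auto simp: bij_betw_def)
qed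

definition fmap :: "('v \<Rightarrow> 'w) \<Rightarrow> ('r,'v) fact \<Rightarrow> ('r,'w) fact" where
  "fmap e f = (fst f, map e (snd f))"

lemma values_mono: "A \<subseteq> B \<Longrightarrow> values_of A \<subseteq> values_of B"
  unfolding values_of_def by auto

lemma values_Un: "values_of (A \<union> B) = values_of A \<union> values_of B"
  unfolding values_of_def by auto

lemma values_fmap: "values_of (fmap e ` I) = e ` values_of I"
  unfolding values_of_def fmap_def by auto

lemma values_acc: "values_of (acc_part Sch \<sigma>) = (\<Union>i. values_of (acc_part_step Sch \<sigma> i))"
  unfolding values_of_def acc_part_def by auto

lemma step_mono_Suc: "acc_part_step Sch \<sigma> i \<subseteq> acc_part_step Sch \<sigma> (Suc i)"
proof (induction i)
  case 0 then show ?case by simp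
next
  case (Suc i)
  have "values_of (acc_part_step Sch \<sigma> i) \<subseteq> values_of (acc_part_step Sch \<sigma> (Suc i))"
    using Suc values_mono by blast
  then show ?case by (simp only: acc_part_step.simps) blast
qed

lemma step_mono: "i \<le> j \<Longrightarrow> acc_part_step Sch \<sigma> i \<subseteq> acc_part_step Sch \<sigma> j"
  using lift_Suc_mono_le[of "acc_part_step Sch \<sigma>"] step_mono_Suc by blast

lemma finite_chain:
  assumes "finite F" "F \<subseteq> (\<Union>i. X i)" "\<And>i j::nat. i \<le> j \<Longrightarrow> X i \<subseteq> (X j :: 'a set)"
  shows "\<exists>i. F \<subseteq> X i"
  using assms(1,2)
proof (induction F rule: finite_induct)
  case empty then show ?case by simp
next
  case (insert x F)
  from insert.prems have "F \<subseteq> (\<Union>i. X i)" by simp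
  with insert.IH obtain i where i: "F \<subseteq> X i" by blast
  from insert.prems obtain j where j: "x \<in> X j" by blast
  have "X i \<subseteq> X (max i j)" "X j \<subseteq> X (max i j)" using assms(3) by simp_all
  then have "insert x F \<subseteq> X (max i j)"
    using i j by blast
  then show ?case by blast
qed

lemma finite_ran_b:
  assumes "well_formed_schema Sch" "mt \<in> methods Sch" "dom b = meth_inputs Sch mt"
  shows "finite (ran b)"
proof -
  have "finite (meth_inputs Sch mt)"
    using assms unfolding well_formed_schema_def by (meson finite_lessThan finite_subset)
  then have "finite (dom b)" using assms by simp
  then show ?thesis by (simp add: finite_ran)
qed

lemma acc_step_in_inst:
  assumes "valid_selection Sch I \<sigma>"
  shows "acc_part_step Sch \<sigma> i \<subseteq> I"
proof (induction i)
  case 0 then show ?case by simp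
next
  case (Suc i)
  have "\<sigma> mt b \<subseteq> I" if "mt \<in> methods Sch" "dom b = meth_inputs Sch mt"
     "ran b \<subseteq> values_of (acc_part_step Sch \<sigma> i)" for mt b
  proof -
    have "ran b \<subseteq> values_of I" using that(3) values_mono[OF Suc] by blast
    then have "valid_output Sch I mt b (\<sigma> mt b)" using assms that unfolding valid_selection_def by blast
    then show ?thesis unfolding valid_output_def Let_def matching_def by auto
  qed
  then show ?case by auto
qed

lemma acc_in_inst: "valid_selection Sch I \<sigma> \<Longrightarrow> acc_part Sch \<sigma> \<subseteq> I"
  unfolding acc_part_def using acc_step_in_inst by blast

lemma sel_in_acc:
  assumes "well_formed_schema Sch" "mt \<in> methods Sch" "dom b = meth_inputs Sch mt"
    "ran b \<subseteq> values_of (acc_part Sch \<sigma>)"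
  shows "\<sigma> mt b \<subseteq> acc_part Sch \<sigma>"
proof -
  have "finite (ran b)" by (rule finite_ran_b[OF assms(1-3)])
  moreover have "ran b \<subseteq> (\<Union>i. values_of (acc_part_step Sch \<sigma> i))"
    using assms(4) unfolding values_acc .
  moreover have "\<And>i j::nat. i \<le> j \<Longrightarrow> values_of (acc_part_step Sch \<sigma> i) \<subseteq> values_of (acc_part_step Sch \<sigma> j)"
    by (rule values_mono[OF step_mono])
  ultimately obtain i where i: "ran b \<subseteq> values_of (acc_part_step Sch \<sigma> i)"
    using finite_chain[of "ran b" "\<lambda>i. values_of (acc_part_step Sch \<sigma> i)"] by presburger
  then have "\<sigma> mt b \<in> {\<sigma> mt b | mt b. mt \<in> methods Sch \<and> dom b = meth_inputs Sch mt \<and>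
                         ran b \<subseteq> values_of (acc_part_step Sch \<sigma> i)}" using assms(2,3) by blast
  then have "\<sigma> mt b \<subseteq> acc_part_step Sch \<sigma> (Suc i)" by (simp only: acc_part_step.simps) (rule Union_upper)
  then show ?thesis unfolding acc_part_def by (meson UN_upper UNIV_I subset_trans)
qed

lemma ex_valid_output: "\<exists>J. valid_output Sch I mt b J"
proof (cases "meth_bound Sch mt")
  case None
  then show ?thesis unfolding valid_output_def Let_def by auto
next
  case (Some k)
  define M where "M = matching Sch I mt b"
  have "\<exists>J. J \<subseteq> M \<and> finite J \<and> card J \<le> k \<and> (\<forall>j \<le> k. (infinite M \<or> j \<le> card M) \<longrightarrow> j \<le> card J)"
  proof (cases "finite M \<and> card M \<le> k")
    case True then show ?thesis by (intro exI[of _ M]) auto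
  next
    case False
    then obtain J where "J \<subseteq> M" "finite J" "card J = k"
    proof (cases "finite M")
      case True
      then have "k \<le> card M" using False by auto
      then show ?thesis using obtain_subset_with_card_n that by metis
    next
      case False
      then show ?thesis using infinite_arbitrarily_large that by metis
    qed
    then show ?thesis by (intro exI[of _ J]) auto
  qed
  then show ?thesis unfolding valid_output_def Let_def M_def using Some by auto
qed


lemma inj_fmap: "inj e \<Longrightarrow> inj (fmap e)"
  unfolding inj_def fmap_def by (auto simp: prod_eq_iff map_injective inj_def)

lemma wf_fmap: "well_formed_inst ar I \<Longrightarrow> well_formed_inst ar (fmap e ` I)"
  unfolding well_formed_inst_def fmap_def by auto

lemma holds_fmap: "holds_bcq Q I \<Longrightarrow> holds_bcq Q (fmap e ` I)"
proof -
  assume "holds_bcq Q I"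
  then obtain h where h: "\<forall>a \<in> set Q. (fst a, map h (snd a)) \<in> I" unfolding holds_bcq_def by blast
  have "\<forall>a \<in> set Q. (fst a, map (e \<circ> h) (snd a)) \<in> fmap e ` I"
  proof
    fix a assume "a \<in> set Q"
    then have "fmap e (fst a, map h (snd a)) \<in> fmap e ` I" using h by blast
    then show "(fst a, map (e \<circ> h) (snd a)) \<in> fmap e ` I" by (simp add: fmap_def)
  qed
  then show ?thesis unfolding holds_bcq_def by blast
qed

lemma holds_fmap_rev: assumes "inj e" "holds_bcq Q (fmap e ` I)" shows "holds_bcq Q I"
proof -
  obtain h where h: "\<forall>a \<in> set Q. (fst a, map h (snd a)) \<in> fmap e ` I"
    using assms(2) unfolding holds_bcq_def by blast
  have "\<forall>a \<in> set Q. (fst a, map (inv e \<circ> h) (snd a)) \<in> I"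
  proof
    fix a assume "a \<in> set Q"
    then obtain t where t: "t \<in> I" "(fst a, map h (snd a)) = fmap e t" using h by blast
    then have "map h (snd a) = map e (snd t)" "fst a = fst t" by (auto simp: fmap_def)
    then have "map (inv e) (map h (snd a)) = snd t" using assms(1) by (simp add: map_idI)
    then have "(fst a, map (inv e \<circ> h) (snd a)) = t" using \<open>fst a = fst t\<close> by simp
    then show "(fst a, map (inv e \<circ> h) (snd a)) \<in> I" using t by simp
  qed
  then show ?thesis unfolding holds_bcq_def by blast
qed

lemma sat_fmap: fixes e :: "'v \<Rightarrow> 'w" and I :: "('r,'v) inst" and \<Sigma> :: "('r,'x) incl_dep set"
  assumes "inj e" "satisfies I \<Sigma>" shows "satisfies (fmap e ` I) \<Sigma>"
  unfolding satisfies_def satisfies_id_def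
proof (intro ballI allI impI)
  fix \<tau> and h :: "'x \<Rightarrow> 'w"
  assume tau: "\<tau> \<in> \<Sigma>" and hb: "(id_body_rel \<tau>, map h (id_body_vars \<tau>)) \<in> fmap e ` I"
  then obtain t where t: "t \<in> I" "(id_body_rel \<tau>, map h (id_body_vars \<tau>)) = fmap e t" by blast
  then have eqs: "map h (id_body_vars \<tau>) = map e (snd t)" "id_body_rel \<tau> = fst t" by (auto simp: fmap_def)
  then have m: "map (inv e \<circ> h) (id_body_vars \<tau>) = snd t" using assms(1)
    by (metis inv_o_cancel list.map_comp list.map_id)
  have "(id_body_rel \<tau>, map (inv e \<circ> h) (id_body_vars \<tau>)) \<in> I" using m eqs t by simp
  then obtain h' where h': "\<forall>x \<in> set (id_body_vars \<tau>). h' x = (inv e \<circ> h) x"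
      "(id_head_rel \<tau>, map h' (id_head_vars \<tau>)) \<in> I"
    using assms(2) tau unfolding satisfies_def satisfies_id_def by blast
  have rng: "h x \<in> range e" if "x \<in> set (id_body_vars \<tau>)" for x
  proof -
    from that obtain j where "j < length (id_body_vars \<tau>)" "id_body_vars \<tau> ! j = x"
      by (meson in_set_conv_nth)
    then have "h x = map h (id_body_vars \<tau>) ! j" by simp
    also have "\<dots> = map e (snd t) ! j" using eqs by simp
    finally show ?thesis using \<open>j < length (id_body_vars \<tau>)\<close> eqs(1)
      by (metis length_map nth_map rangeI)
  qed
  have "\<forall>x \<in> set (id_body_vars \<tau>). (e \<circ> h') x = h x"
    using h'(1) rng by (simp add: f_inv_into_f)
  moreover have "(id_head_rel \<tau>, map (e \<circ> h') (id_head_vars \<tau>)) \<in> fmap e ` I"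
  proof -
    have "fmap e (id_head_rel \<tau>, map h' (id_head_vars \<tau>)) \<in> fmap e ` I" using h'(2) by blast
    then show ?thesis by (simp add: fmap_def)
  qed
  ultimately show "\<exists>h'. (\<forall>x\<in>set (id_body_vars \<tau>). h' x = h x) \<and>
           (id_head_rel \<tau>, map h' (id_head_vars \<tau>)) \<in> fmap e ` I" by blast
qed

lemma sat_Un: assumes "satisfies I \<Sigma>" "satisfies J \<Sigma>" shows "satisfies (I \<union> J) \<Sigma>"
  using assms unfolding satisfies_def satisfies_id_def by blast

lemma wf_Un: "well_formed_inst ar I \<Longrightarrow> well_formed_inst ar J \<Longrightarrow> well_formed_inst ar (I \<union> J)"
  unfolding well_formed_inst_def by blast


lemma matching_fmap:
  assumes "inj e" "well_formed_schema Sch" "mt \<in> methods Sch" "well_formed_inst (arity Sch) I"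
  shows "matching Sch (fmap e ` I) mt (\<lambda>i. map_option e (b0 i)) = fmap e ` matching Sch I mt b0"
proof -
  have inp: "meth_inputs Sch mt \<subseteq> {..< arity Sch (meth_rel Sch mt)}"
    using assms(2,3) unfolding well_formed_schema_def by blast
  have key: "(\<forall>i \<in> meth_inputs Sch mt. map_option e (b0 i) = Some (map e (snd f) ! i)) \<longleftrightarrow>
             (\<forall>i \<in> meth_inputs Sch mt. b0 i = Some (snd f ! i))"
    if "f \<in> I" "fst f = meth_rel Sch mt" for f
  proof -
    have len: "length (snd f) = arity Sch (meth_rel Sch mt)"
      using assms(4) that unfolding well_formed_inst_def by auto
    have "map_option e (b0 i) = Some (map e (snd f) ! i) \<longleftrightarrow> b0 i = Some (snd f ! i)"
      if "i \<in> meth_inputs Sch mt" for i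
    proof -
      have "i < length (snd f)" using inp that len by auto
      then have "map e (snd f) ! i = e (snd f ! i)" by simp
      moreover have "map_option e x = Some (e y) \<longleftrightarrow> x = Some y" for x y
        using assms(1) by (cases x) (auto simp: inj_def)
      ultimately show ?thesis by simp
    qed
    then show ?thesis by blast
  qed
  show ?thesis
  proof
    show "matching Sch (fmap e ` I) mt (\<lambda>i. map_option e (b0 i)) \<subseteq> fmap e ` matching Sch I mt b0"
    proof
      fix g assume "g \<in> matching Sch (fmap e ` I) mt (\<lambda>i. map_option e (b0 i))"
      then obtain f where f: "f \<in> I" "g = fmap e f" "fst g = meth_rel Sch mt"
         "\<forall>i \<in> meth_inputs Sch mt. map_option e (b0 i) = Some (snd g ! i)"
        unfolding matching_def by blast
      then have "fst f = meth_rel Sch mt" by (simp add: fmap_def)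
      moreover have "\<forall>i \<in> meth_inputs Sch mt. map_option e (b0 i) = Some (map e (snd f) ! i)"
        using f by (simp add: fmap_def)
      ultimately have "f \<in> matching Sch I mt b0" using key f(1) unfolding matching_def by blast
      then show "g \<in> fmap e ` matching Sch I mt b0" using f(2) by blast
    qed
  next
    show "fmap e ` matching Sch I mt b0 \<subseteq> matching Sch (fmap e ` I) mt (\<lambda>i. map_option e (b0 i))"
    proof
      fix g assume "g \<in> fmap e ` matching Sch I mt b0"
      then obtain f where f: "f \<in> I" "g = fmap e f" "fst f = meth_rel Sch mt"
         "\<forall>i \<in> meth_inputs Sch mt. b0 i = Some (snd f ! i)"
        unfolding matching_def by blast
      then have "\<forall>i \<in> meth_inputs Sch mt. map_option e (b0 i) = Some (map e (snd f) ! i)"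
        using key by blast
      moreover have "g \<in> fmap e ` I" using f(1,2) by blast
      ultimately show "g \<in> matching Sch (fmap e ` I) mt (\<lambda>i. map_option e (b0 i))"
        using f(2,3) unfolding matching_def by (simp add: fmap_def)
    qed
  qed
qed

lemma valid_output_fmap:
  assumes "inj e" "well_formed_schema Sch" "mt \<in> methods Sch" "well_formed_inst (arity Sch) I"
    "valid_output Sch I mt b0 J"
  shows "valid_output Sch (fmap e ` I) mt (\<lambda>i. map_option e (b0 i)) (fmap e ` J)"
proof -
  have inj: "inj (fmap e)" using inj_fmap assms(1) by blast
  define M where "M = matching Sch I mt b0"
  have MM: "matching Sch (fmap e ` I) mt (\<lambda>i. map_option e (b0 i)) = fmap e ` M"
    unfolding M_def by (rule matching_fmap[OF assms(1-4)])
  have JM: "J \<subseteq> M" using assms(5) unfolding valid_output_def Let_def M_def by blast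
  have injJ: "inj_on (fmap e) J" and injM: "inj_on (fmap e) M"
    using inj_on_subset[OF inj subset_UNIV] by blast+
  have cJ: "card (fmap e ` J) = card J" and fJ: "finite (fmap e ` J) = finite J"
    using card_image[OF injJ] finite_image_iff[OF injJ] by auto
  have cM: "card (fmap e ` M) = card M" and fM: "finite (fmap e ` M) = finite M"
    using card_image[OF injM] finite_image_iff[OF injM] by auto
  show ?thesis
  proof (cases "meth_bound Sch mt")
    case None
    then have "J = M" using assms(5) unfolding valid_output_def Let_def M_def by simp
    then show ?thesis unfolding valid_output_def Let_def MM using None by simp
  next
    case (Some k)
    then have v: "finite J" "card J \<le> k" "\<forall>j \<le> k. (infinite M \<or> j \<le> card M) \<longrightarrow> j \<le> card J"
      using assms(5) unfolding valid_output_def Let_def M_def by auto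
    show ?thesis unfolding valid_output_def Let_def MM using Some v JM cJ fJ cM fM by auto
  qed
qed

lemma transport:
  fixes e :: "'v \<Rightarrow> 'w" and I :: "('r,'v) inst" and \<sigma> :: "('m,'r,'v) selection"
    and Sch :: "('r,'x,'m) schema"
  assumes "inj e" "well_formed_schema Sch" "well_formed_inst (arity Sch) I"
    "valid_selection Sch I \<sigma>"
  shows "\<exists>\<sigma>'. valid_selection Sch (fmap e ` I) \<sigma>' \<and> acc_part Sch \<sigma>' = fmap e ` acc_part Sch \<sigma>"
proof -
  define bk :: "'w binding \<Rightarrow> 'v binding" where "bk b = (\<lambda>i. map_option (inv e) (b i))" for b
  define \<sigma>' where "\<sigma>' mt b = (if ran b \<subseteq> range e then fmap e ` \<sigma> mt (bk b)
       else SOME J. valid_output Sch (fmap e ` I) mt b J)" for mt b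
  have fw: "(\<lambda>i. map_option e (bk b i)) = b" if "ran b \<subseteq> range e" for b
  proof
    fix i show "map_option e (bk b i) = b i"
    proof (cases "b i")
      case None then show ?thesis by (simp add: bk_def)
    next
      case (Some v)
      then have "v \<in> range e" using that ranI by fast
      then show ?thesis using Some by (simp add: bk_def f_inv_into_f)
    qed
  qed
  have bw: "bk (\<lambda>i. map_option e (c i)) = c" for c
  proof
    fix i show "bk (\<lambda>i. map_option e (c i)) i = c i"
      using assms(1) by (cases "c i") (simp_all add: bk_def)
  qed
  have dom_bk: "dom (bk b) = dom b" for b unfolding bk_def by auto
  have ran_bk: "ran (bk b) \<subseteq> V" if "ran b \<subseteq> e ` V" for b V
  proof
    fix x assume "x \<in> ran (bk b)"
    then obtain i where "bk b i = Some x" by (auto simp: ran_def)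
    then obtain v where v: "b i = Some v" "x = inv e v" by (auto simp: bk_def)
    then have "v \<in> e ` V" using that ranI by fast
    then show "x \<in> V" using v assms(1) by auto
  qed
  have dom_fw: "dom (\<lambda>i. map_option e (c i)) = dom c" for c by auto
  have ran_fw: "ran (\<lambda>i. map_option e (c i)) = e ` ran c" for c
    by (auto simp: ran_def)
  have valid: "valid_selection Sch (fmap e ` I) \<sigma>'"
    unfolding valid_selection_def
  proof (intro ballI allI impI)
    fix mt b assume mt: "mt \<in> methods Sch" and b: "dom b = meth_inputs Sch mt \<and> ran b \<subseteq> values_of (fmap e ` I)"
    show "valid_output Sch (fmap e ` I) mt b (\<sigma>' mt b)"
    proof (cases "ran b \<subseteq> range e")
      case True
      have rb: "ran b \<subseteq> e ` values_of I" using b values_fmap by metis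
      have "valid_output Sch I mt (bk b) (\<sigma> mt (bk b))"
        using assms(4) mt b dom_bk ran_bk[OF rb] unfolding valid_selection_def by metis
      from valid_output_fmap[OF assms(1,2) mt assms(3) this]
      show ?thesis unfolding \<sigma>'_def using True fw[OF True] by simp
    next
      case False
      then show ?thesis unfolding \<sigma>'_def using someI_ex[OF ex_valid_output] by simp
    qed
  qed
  have steps: "acc_part_step Sch \<sigma>' i = fmap e ` acc_part_step Sch \<sigma> i" for i
  proof (induction i)
    case 0 then show ?case by simp
  next
    case (Suc i)
    define S where "S = acc_part_step Sch \<sigma> i"
    have vS: "values_of (acc_part_step Sch \<sigma>' i) = e ` values_of S" using Suc values_fmap S_def by metis
    have "{\<sigma>' mt b | mt b. mt \<in> methods Sch \<and> dom b = meth_inputs Sch mt \<and>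
                         ran b \<subseteq> values_of (acc_part_step Sch \<sigma>' i)}
        = (\<lambda>X. fmap e ` X) ` {\<sigma> mt b | mt b. mt \<in> methods Sch \<and> dom b = meth_inputs Sch mt \<and>
                         ran b \<subseteq> values_of S}" (is "?L = ?R")
    proof
      show "?L \<subseteq> ?R"
      proof
        fix X assume "X \<in> ?L"
        then obtain mt b where X: "X = \<sigma>' mt b" "mt \<in> methods Sch" "dom b = meth_inputs Sch mt"
          "ran b \<subseteq> e ` values_of S" using vS by auto
        then have "ran b \<subseteq> range e" by auto
        then have "X = fmap e ` \<sigma> mt (bk b)" using X(1) unfolding \<sigma>'_def by simp
        moreover have "dom (bk b) = meth_inputs Sch mt" "ran (bk b) \<subseteq> values_of S"
          using X dom_bk ran_bk by auto
        ultimately show "X \<in> ?R" using X(2) by blast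
      qed
    next
      show "?R \<subseteq> ?L"
      proof
        fix X assume "X \<in> ?R"
        then obtain mt c where X: "X = fmap e ` \<sigma> mt c" "mt \<in> methods Sch" "dom c = meth_inputs Sch mt"
          "ran c \<subseteq> values_of S" by auto
        define b where "b = (\<lambda>i. map_option e (c i))"
        have rb: "ran b = e ` ran c" unfolding b_def by (rule ran_fw)
        have "ran b \<subseteq> e ` values_of S" "ran b \<subseteq> range e" using X(4) unfolding rb by auto
        moreover have "dom b = meth_inputs Sch mt" unfolding b_def dom_fw by (rule X(3))
        moreover have "\<sigma>' mt b = X" using X(1) bw b_def calculation(2) unfolding \<sigma>'_def by simp
        ultimately show "X \<in> ?L" using X(2) vS by blast
      qed
    qed
    then show ?case unfolding S_def by (simp only: acc_part_step.simps image_Union)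
  qed
  have "acc_part Sch \<sigma>' = fmap e ` acc_part Sch \<sigma>"
    unfolding acc_part_def steps by blast
  with valid show ?thesis by blast
qed


lemma matching_Un: "matching Sch (K \<union> L) mt b = matching Sch K mt b \<union> matching Sch L mt b"
  unfolding matching_def by auto

lemma union_lemma:
  fixes K L :: "('r,'v) inst" and Sch :: "('r,'x,'m) schema"
  assumes wf: "well_formed_schema Sch" and wfK: "well_formed_inst (arity Sch) K"
    and vK: "valid_selection Sch K \<sigma>K" and vL: "valid_selection Sch L \<sigma>L"
    and sub: "acc_part Sch \<sigma>K \<subseteq> acc_part Sch \<sigma>L"
    and disj: "values_of K \<inter> values_of L \<subseteq> values_of (acc_part Sch \<sigma>K)"
  shows "\<exists>\<sigma>. valid_selection Sch (K \<union> L) \<sigma> \<and> acc_part Sch \<sigma> = acc_part Sch \<sigma>L"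
proof -
  define \<sigma> where "\<sigma> mt b = (if ran b \<subseteq> values_of L then \<sigma>L mt b
      else SOME J. valid_output Sch (K \<union> L) mt b J)" for mt b
  have good: "valid_output Sch (K \<union> L) mt b (\<sigma>L mt b)"
    if mt: "mt \<in> methods Sch" and db: "dom b = meth_inputs Sch mt" and rb: "ran b \<subseteq> values_of L" for mt b
  proof -
    define Mk where "Mk = matching Sch K mt b"
    define Ml where "Ml = matching Sch L mt b"
    define SL where "SL = \<sigma>L mt b"
    have vSL: "valid_output Sch L mt b SL" using vL mt db rb unfolding valid_selection_def SL_def by blast
    have claim: "Mk \<subseteq> Ml \<or> (\<exists>k. meth_bound Sch mt = Some k \<and> (infinite Ml \<or> k \<le> card Ml))"
    proof (cases "Mk = {}")
      case True then show ?thesis by simp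
    next
      case False
      then obtain t where t: "t \<in> Mk" by blast
      then have t': "t \<in> K" "fst t = meth_rel Sch mt" "\<forall>i \<in> meth_inputs Sch mt. b i = Some (snd t ! i)"
        unfolding Mk_def matching_def by auto
      have len: "length (snd t) = arity Sch (meth_rel Sch mt)"
        using wfK t' unfolding well_formed_inst_def by auto
      have inp: "meth_inputs Sch mt \<subseteq> {..< arity Sch (meth_rel Sch mt)}"
        using wf mt unfolding well_formed_schema_def by blast
      have rbK: "ran b \<subseteq> values_of K"
      proof
        fix v assume "v \<in> ran b"
        then obtain i where bi: "b i = Some v" by (auto simp: ran_def)
        then have i: "i \<in> meth_inputs Sch mt" using db by (auto simp: dom_def)
        then have "v = snd t ! i" using t' bi by simp
        moreover have "i < length (snd t)" using i inp len by auto
        ultimately have "v \<in> set (snd t)" by simp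
        then show "v \<in> values_of K" using t'(1) unfolding values_of_def by blast
      qed
      then have "ran b \<subseteq> values_of (acc_part Sch \<sigma>K)" using rb disj by blast
      then have "\<sigma>K mt b \<subseteq> acc_part Sch \<sigma>K" using sel_in_acc[OF wf mt db] by blast
      then have SKL: "\<sigma>K mt b \<subseteq> L" using sub acc_in_inst[OF vL] by blast
      define SK where "SK = \<sigma>K mt b"
      have vSK: "valid_output Sch K mt b SK" using vK mt db rbK unfolding valid_selection_def SK_def by blast
      then have SKM: "SK \<subseteq> Mk" unfolding valid_output_def Let_def Mk_def by simp
      have SKML: "SK \<subseteq> Ml" using SKM SKL unfolding SK_def Mk_def Ml_def matching_def by auto
      show ?thesis
      proof (cases "meth_bound Sch mt")
        case None
        then have "SK = Mk" using vSK unfolding valid_output_def Let_def Mk_def by simp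
        then show ?thesis using SKML by simp
      next
        case (Some k)
        show ?thesis
        proof (cases "Mk \<subseteq> Ml")
          case True then show ?thesis by simp
        next
          case False
          then have ne: "SK \<noteq> Mk" using SKML by blast
          have v: "finite SK" "\<forall>j \<le> k. (infinite Mk \<or> j \<le> card Mk) \<longrightarrow> j \<le> card SK"
            using vSK Some unfolding valid_output_def Let_def Mk_def by auto
          have "k \<le> card SK"
          proof (cases "finite Mk \<and> card Mk \<le> k")
            case True
            then have "card Mk \<le> card SK" using v by blast
            moreover have "card SK \<le> card Mk" using True SKM card_mono by blast
            ultimately have "SK = Mk" using True SKM card_subset_eq by (metis le_antisym)
            then show ?thesis using ne by blast
          next
            case False
            then show ?thesis using v by auto
          qed
          then have "infinite Ml \<or> k \<le> card Ml"
            using SKML card_mono[of Ml SK] by auto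
          then show ?thesis using Some by blast
        qed
      qed
    qed
    have MU: "matching Sch (K \<union> L) mt b = Mk \<union> Ml" unfolding Mk_def Ml_def by (rule matching_Un)
    show ?thesis
    proof (cases "Mk \<subseteq> Ml")
      case True
      then have eq: "matching Sch (K \<union> L) mt b = matching Sch L mt b" using MU Ml_def by blast
      show ?thesis using vSL unfolding SL_def by (simp only: valid_output_def eq)
    next
      case False
      then obtain k where k: "meth_bound Sch mt = Some k" "infinite Ml \<or> k \<le> card Ml" using claim by blast
      have v: "SL \<subseteq> Ml" "finite SL" "card SL \<le> k" "\<forall>j \<le> k. (infinite Ml \<or> j \<le> card Ml) \<longrightarrow> j \<le> card SL"
        using vSL k(1) unfolding valid_output_def Let_def Ml_def by auto
      have "\<forall>j \<le> k. j \<le> card SL" using v(4) k(2) by auto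
      then show ?thesis unfolding valid_output_def Let_def MU SL_def[symmetric] using k(1) v by auto
    qed
  qed
  have valid: "valid_selection Sch (K \<union> L) \<sigma>"
    unfolding valid_selection_def
  proof (intro ballI allI impI)
    fix mt b assume mt: "mt \<in> methods Sch" and b: "dom b = meth_inputs Sch mt \<and> ran b \<subseteq> values_of (K \<union> L)"
    show "valid_output Sch (K \<union> L) mt b (\<sigma> mt b)"
    proof (cases "ran b \<subseteq> values_of L")
      case True
      then show ?thesis unfolding \<sigma>_def using good mt b by simp
    next
      case False
      then show ?thesis unfolding \<sigma>_def using someI_ex[OF ex_valid_output] by simp
    qed
  qed
  have steps: "acc_part_step Sch \<sigma> i = acc_part_step Sch \<sigma>L i" for i
  proof (induction i)
    case 0 then show ?case by simp
  next
    case (Suc i)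
    have vL': "values_of (acc_part_step Sch \<sigma>L i) \<subseteq> values_of L"
      using values_mono[OF acc_step_in_inst[OF vL]] .
    have "{\<sigma> mt b | mt b. mt \<in> methods Sch \<and> dom b = meth_inputs Sch mt \<and>
                         ran b \<subseteq> values_of (acc_part_step Sch \<sigma> i)}
        = {\<sigma>L mt b | mt b. mt \<in> methods Sch \<and> dom b = meth_inputs Sch mt \<and>
                         ran b \<subseteq> values_of (acc_part_step Sch \<sigma>L i)}"
      unfolding Suc using vL' unfolding \<sigma>_def by (metis (lifting) subset_trans)
    then show ?case by (simp only: acc_part_step.simps)
  qed
  have "acc_part Sch \<sigma> = acc_part Sch \<sigma>L" unfolding acc_part_def steps ..
  with valid show ?thesis by blast
qed


lemma holds_mono: "holds_bcq Q I \<Longrightarrow> I \<subseteq> J \<Longrightarrow> holds_bcq Q J"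
  unfolding holds_bcq_def by blast

theorem mainTheorem14:
  fixes Sch :: "('r,'x,'m) schema" and Q :: "('r,'x) bcq"
  assumes "infinite (UNIV :: 'v set)"
    and "well_formed_schema Sch"
    and "well_formed_bcq (arity Sch) Q"
    and "access_determined Sch Q TYPE('v)"
  shows "access_mono_determined Sch Q TYPE('v)"
  unfolding access_mono_determined_def
proof (intro allI impI)
  fix I1 I2 :: "('r,'v) inst" and \<sigma>1 \<sigma>2
  assume H: "well_formed_inst (arity Sch) I1 \<and> well_formed_inst (arity Sch) I2 \<and>
        satisfies I1 (constraints Sch) \<and> satisfies I2 (constraints Sch) \<and>
        valid_selection Sch I1 \<sigma>1 \<and> valid_selection Sch I2 \<sigma>2 \<and>
        acc_part Sch \<sigma>1 \<subseteq> acc_part Sch \<sigma>2"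
    and Q1: "holds_bcq Q I1"
  have wf: "well_formed_schema Sch" by (rule assms(2))
  obtain p :: "'v + 'v \<Rightarrow> 'v" where p: "inj p" using ex_inj[OF assms(1)] by blast
  define V1 where "V1 = values_of (acc_part Sch \<sigma>1)"
  define e where "e = (\<lambda>x. p (Inl x))"
  define \<rho> where "\<rho> = (\<lambda>x. if x \<in> V1 then p (Inl x) else p (Inr x))"
  have inje: "inj e" using p unfolding e_def inj_def by auto
  have injr: "inj \<rho>" using p unfolding \<rho>_def inj_def by (auto split: if_splits)
  obtain \<sigma>K where K: "valid_selection Sch (fmap \<rho> ` I1) \<sigma>K" "acc_part Sch \<sigma>K = fmap \<rho> ` acc_part Sch \<sigma>1"
    using transport[OF injr wf] H by blast
  obtain \<sigma>L where L: "valid_selection Sch (fmap e ` I2) \<sigma>L" "acc_part Sch \<sigma>L = fmap e ` acc_part Sch \<sigma>2"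
    using transport[OF inje wf] H by blast
  have same: "fmap \<rho> ` acc_part Sch \<sigma>1 = fmap e ` acc_part Sch \<sigma>1"
  proof (rule image_cong[OF refl])
    fix f assume "f \<in> acc_part Sch \<sigma>1"
    then have "set (snd f) \<subseteq> V1" unfolding V1_def values_of_def by blast
    then have "map \<rho> (snd f) = map e (snd f)" unfolding \<rho>_def e_def by (auto intro: map_cong)
    then show "fmap \<rho> f = fmap e f" by (simp add: fmap_def)
  qed
  have sub: "acc_part Sch \<sigma>K \<subseteq> acc_part Sch \<sigma>L"
    using K(2) L(2) same H by auto
  have disj: "values_of (fmap \<rho> ` I1) \<inter> values_of (fmap e ` I2) \<subseteq> values_of (acc_part Sch \<sigma>K)"
  proof
    fix v assume "v \<in> values_of (fmap \<rho> ` I1) \<inter> values_of (fmap e ` I2)"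
    then obtain x y where xy: "v = \<rho> x" "v = e y" unfolding values_fmap by blast
    have "x \<in> V1"
    proof (rule ccontr)
      assume "x \<notin> V1"
      then have "p (Inr x) = p (Inl y)" using xy unfolding \<rho>_def e_def by simp
      then show False using p unfolding inj_def by blast
    qed
    then show "v \<in> values_of (acc_part Sch \<sigma>K)" unfolding K(2) values_fmap V1_def[symmetric]
      using xy by blast
  qed
  have wfK: "well_formed_inst (arity Sch) (fmap \<rho> ` I1)" using wf_fmap H by blast
  have wfL: "well_formed_inst (arity Sch) (fmap e ` I2)" using wf_fmap H by blast
  have satK: "satisfies (fmap \<rho> ` I1) (constraints Sch)" using sat_fmap[OF injr] H by blast
  have satL: "satisfies (fmap e ` I2) (constraints Sch)" using sat_fmap[OF inje] H by blast
  obtain \<sigma> where U: "valid_selection Sch (fmap \<rho> ` I1 \<union> fmap e ` I2) \<sigma>"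
      "acc_part Sch \<sigma> = acc_part Sch \<sigma>L"
    using union_lemma[OF wf wfK K(1) L(1) sub disj] by blast
  have QK: "holds_bcq Q (fmap \<rho> ` I1)" using holds_fmap[OF Q1] .
  then have QU: "holds_bcq Q (fmap \<rho> ` I1 \<union> fmap e ` I2)" using holds_mono by blast
  have "holds_bcq Q (fmap \<rho> ` I1 \<union> fmap e ` I2) \<longleftrightarrow> holds_bcq Q (fmap e ` I2)"
    using assms(4) unfolding access_determined_def
    using wf_Un[OF wfK wfL] wfL sat_Un[OF satK satL] satL U L(1) by blast
  then have "holds_bcq Q (fmap e ` I2)" using QU by blast
  then show "holds_bcq Q I2" using holds_fmap_rev[OF inje] by blast
qed

end
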